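(* Let $G$ be a countable amenable group and fix $A\subset G$. Suppose there exist a two-sided Følner sequence $\Phi$ on $G$ and a non-principal ultrafilter $\mathfrak{p}$ on $G$ such that $\mathsf{d}_\Phi(Ag^{-1}\cap A\mathfrak{p}^{-1})$ exists for all $g\in G$ and $$\lim_{g\to\mathfrak{p}}\mathsf{d}_\Phi(Ag^{-1}\cap A\mathfrak{p}^{-1})>0.$$ Then there exist infinite sets $B,C\subset G$ such that $BC\subset A$.
   Context: A two-sided Følner sequence on $G$ is a sequence $\Phi\colon N\mapsto\Phi_N$ of finite non-empty subsets of $G$ with $|(\Phi_Ng)\triangle\Phi_N|/|\Phi_N|\to0$ and $|\Phi_N\triangle(g\Phi_N)|/|\Phi_N|\to0$ for all $g\in G$. $\mathsf{d}_\Phi(E)=\lim_N|E\cap\Phi_N|/|\Phi_N|$ when it exists. For $g\in G$, $Ag^{-1}=\{h\in G: hg\in A\}$ and $g^{-1}A=\{h\in G: gh\in A\}$; for an ultrafilter $\mathfrak{p}$ on $G$, $A\mathfrak{p}^{-1}=\{g\in G: g^{-1}A\in\mathfrak{p}\}$. $\lim_{g\to\mathfrak{p}}$ denotes the ultrafilter limit of a bounded real-valued function on $G$. $BC=\{bc:b\in B,c\in C\}$. *)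

theory Defs
  imports "HOL-Analysis.Analysis" "HOL-Library.Countable"
begin

text \<open>Groups are written additively (type class group_add, not necessarily commutative):
  the group product g h is g + h.\<close>

definition folner_seq :: "(nat \<Rightarrow> 'a::group_add set) \<Rightarrow> bool" where
  "folner_seq \<Phi> \<longleftrightarrow> (\<forall>N. finite (\<Phi> N) \<and> \<Phi> N \<noteq> {}) \<and>
     (\<forall>g. (\<lambda>N. real (card (((\<lambda>h. h + g) ` \<Phi> N) - \<Phi> N \<union> (\<Phi> N - (\<lambda>h. h + g) ` \<Phi> N)))
              / real (card (\<Phi> N))) \<longlonglongrightarrow> 0)"

definition two_sided_folner_seq :: "(nat \<Rightarrow> 'a::group_add set) \<Rightarrow> bool" where
  "two_sided_folner_seq \<Phi> \<longleftrightarrow> (\<forall>N. finite (\<Phi> N) \<and> \<Phi> N \<noteq> {}) \<and>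
     (\<forall>g. (\<lambda>N. real (card (((\<lambda>h. h + g) ` \<Phi> N) - \<Phi> N \<union> (\<Phi> N - (\<lambda>h. h + g) ` \<Phi> N)))
              / real (card (\<Phi> N))) \<longlonglongrightarrow> 0) \<and>
     (\<forall>g. (\<lambda>N. real (card (((\<lambda>h. g + h) ` \<Phi> N) - \<Phi> N \<union> (\<Phi> N - (\<lambda>h. g + h) ` \<Phi> N)))
              / real (card (\<Phi> N))) \<longlonglongrightarrow> 0)"

definition amenable_group :: "'a::group_add itself \<Rightarrow> bool" where
  "amenable_group _ \<longleftrightarrow> (\<exists>\<Phi>::nat \<Rightarrow> 'a set. folner_seq \<Phi>)"

definition dens_ratio :: "(nat \<Rightarrow> 'a set) \<Rightarrow> 'a set \<Rightarrow> nat \<Rightarrow> real" where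
  "dens_ratio \<Phi> E N = real (card (E \<inter> \<Phi> N)) / real (card (\<Phi> N))"

definition density_exists :: "(nat \<Rightarrow> 'a set) \<Rightarrow> 'a set \<Rightarrow> bool" where
  "density_exists \<Phi> E \<longleftrightarrow> convergent (dens_ratio \<Phi> E)"

definition density :: "(nat \<Rightarrow> 'a set) \<Rightarrow> 'a set \<Rightarrow> real" where
  "density \<Phi> E = lim (dens_ratio \<Phi> E)"

definition ultrafilter :: "'a filter \<Rightarrow> bool" where
  "ultrafilter F \<longleftrightarrow> F \<noteq> bot \<and> (\<forall>P. eventually P F \<or> eventually (\<lambda>x. \<not> P x) F)"

definition nonprincipal :: "'a filter \<Rightarrow> bool" where
  "nonprincipal F \<longleftrightarrow> (\<forall>x. \<not> eventually (\<lambda>y. y = x) F)"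

definition rtrans_inv :: "'a::group_add set \<Rightarrow> 'a \<Rightarrow> 'a set" where
  "rtrans_inv A g = {h. h + g \<in> A}"

text \<open>A p^{-1} = {g. g^{-1}A \<in> p} = {g. eventually (h. gh \<in> A) p}\<close>
definition uf_rtrans_inv :: "'a::group_add set \<Rightarrow> 'a filter \<Rightarrow> 'a set" where
  "uf_rtrans_inv A p = {g. eventually (\<lambda>h. g + h \<in> A) p}"

end

theory Submission
  imports Defs
begin

lemma max_filter_uf:
  assumes "F \<noteq> bot"
  assumes max: "\<And>G. G \<noteq> bot \<Longrightarrow> G \<le> F \<Longrightarrow> F = G"
  shows "ultrafilter F"
  unfolding ultrafilter_def
proof (intro conjI allI assms(1))
  fix P
  show "eventually P F \<or> (\<forall>\<^sub>Fx in F. \<not> P x)"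
  proof (rule disjCI)
    assume "\<not> (\<forall>\<^sub>Fx in F. \<not> P x)"
    then have "inf F (principal {x. P x}) \<noteq> bot"
      by (simp add: trivial_limit_def eventually_inf_principal not_eventually)
    then have F: "F = inf F (principal {x. P x})"
      by (rule max) simp
    show "eventually P F"
      by (subst F) (simp add: eventually_inf_principal)
  qed
qed

lemma ex_uf:
  fixes F :: "'a filter"
  assumes F: "F \<noteq> bot"
  shows "\<exists>U\<le>F. ultrafilter U"
proof -
  let ?X = "{G. G \<noteq> bot \<and> G \<le> F}"
  let ?R = "{(b, a). a \<noteq> bot \<and> a \<le> b \<and> b \<le> F}"
  have bot_notin_R: "c \<in> Chains ?R \<Longrightarrow> bot \<notin> c" for c
    by (auto simp: Chains_def)
  have [simp]: "Field ?R = ?X"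
    by (auto simp: Field_def bot_unique)
  have "\<exists>m\<in>Field ?R. \<forall>a\<in>Field ?R. (m, a) \<in> ?R \<longrightarrow> a = m" (is "\<exists>m\<in>?A. ?B m")
  proof (rule Zorns_po_lemma)
    show "Partial_order ?R"
      by (auto simp: partial_order_on_def preorder_on_def
          antisym_def refl_on_def trans_def Field_def bot_unique)
    show "\<exists>u\<in>Field ?R. \<forall>a\<in>C. (a, u) \<in> ?R" if C: "C \<in> Chains ?R" for C
    proof (simp, intro exI conjI ballI)
      have Inf_C: "Inf C \<noteq> bot" "Inf C \<le> F" if "C \<noteq> {}"
      proof -
        from C that have "Inf C = bot \<longleftrightarrow> (\<exists>x\<in>C. x = bot)"
          unfolding trivial_limit_def by (intro eventually_Inf_base) (auto simp: Chains_def)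
        with C show "Inf C \<noteq> bot"
          by (simp add: bot_notin_R)
        from that obtain x where "x \<in> C" by auto
        with C show "Inf C \<le> F"
          by (auto intro!: Inf_lower2[of x] simp: Chains_def)
      qed
      then have [simp]: "inf F (Inf C) = (if C = {} then F else Inf C)"
        using C by (auto simp add: inf_absorb2)
      from C show "inf F (Inf C) \<noteq> bot"
        by (simp add: F Inf_C)
      from C show "inf F (Inf C) \<le> F"
        by (simp add: Chains_def Inf_C F)
      with C show "inf F (Inf C) \<le> x" "x \<le> F" if "x \<in> C" for x
        using that  by (auto intro: Inf_lower simp: Chains_def)
    qed
  qed
  then obtain U where U: "U \<in> ?A" "?B U" ..
  from U have "U \<le> F" "U \<noteq> bot" by auto
  moreover have "ultrafilter U"
    using U by (auto intro!: max_filter_uf)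
  ultimately show ?thesis by blast
qed

lemma uf_lim:
  fixes f :: "'b \<Rightarrow> real"
  assumes uf: "ultrafilter F" and K: "compact K" and ev: "\<forall>\<^sub>F x in F. f x \<in> K"
  shows "(f \<longlongrightarrow> Lim F f) F"
proof -
  have Fb: "F \<noteq> bot" using uf by (simp add: ultrafilter_def)
  have "filtermap f F \<noteq> bot" using Fb by (simp add: filtermap_bot_iff)
  moreover have "eventually (\<lambda>y. y \<in> K) (filtermap f F)" using ev by (simp add: eventually_filtermap)
  ultimately obtain x where x: "x \<in> K" "inf (nhds x) (filtermap f F) \<noteq> bot"
    using K unfolding compact_filter by blast
  have "(f \<longlongrightarrow> x) F"
    unfolding tendsto_def
  proof (intro allI impI)
    fix S :: "real set" assume S: "open S" "x \<in> S"
    show "\<forall>\<^sub>F y in F. f y \<in> S"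
    proof (rule ccontr)
      assume "\<not> (\<forall>\<^sub>F y in F. f y \<in> S)"
      then have "\<forall>\<^sub>F y in F. f y \<notin> S" using uf unfolding ultrafilter_def by blast
      then have e1: "eventually (\<lambda>y. y \<notin> S) (filtermap f F)" by (simp add: eventually_filtermap)
      have e2: "eventually (\<lambda>y. y \<in> S) (nhds x)" using S by (rule eventually_nhds_in_open)
      have "eventually (\<lambda>y. False) (inf (nhds x) (filtermap f F))"
        unfolding eventually_inf using e1 e2 by blast
      then show False using x(2) by (simp add: eventually_False)
    qed
  qed
  then show ?thesis using Fb by (simp add: tendsto_Lim)
qed

lemma uf_lim01:
  fixes f :: "'b \<Rightarrow> real"
  assumes uf: "ultrafilter F" and ev: "\<And>x. 0 \<le> f x \<and> f x \<le> 1"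
  shows "(f \<longlongrightarrow> Lim F f) F"
  using uf_lim[OF uf compact_Icc[of 0 1]] ev by simp

lemma uf_neg: "ultrafilter F \<Longrightarrow> \<not> eventually P F \<Longrightarrow> eventually (\<lambda>x. \<not> P x) F"
  unfolding ultrafilter_def by blast

lemma ev_ex: "F \<noteq> bot \<Longrightarrow> eventually P F \<Longrightarrow> \<exists>x. P x"
  using eventually_happens by blast

lemma key_step:
  fixes mu :: "'a set \<Rightarrow> real" and p :: "'a filter" and E :: "'a \<Rightarrow> 'a set"
  assumes uf: "ultrafilter p"
    and mu01: "\<And>S. 0 \<le> mu S \<and> mu S \<le> 1"
    and quad: "\<And>(I::'a set) S. finite I \<Longrightarrow> (\<Sum>i\<in>I. mu (S i))^2 \<le> (\<Sum>i\<in>I. \<Sum>j\<in>I. mu (S i \<inter> S j))"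
    and pos: "Lim p (\<lambda>g. mu (T \<inter> E g)) > 0"
  shows "\<forall>\<^sub>F c in p. Lim p (\<lambda>g. mu (T \<inter> E c \<inter> E g)) > 0"
proof (rule ccontr)
  define al where "al U = Lim p (\<lambda>g. mu (U \<inter> E g))" for U
  have pb: "p \<noteq> bot" using uf by (simp add: ultrafilter_def)
  have lim: "((\<lambda>g. mu (U \<inter> E g)) \<longlongrightarrow> al U) p" for U
    unfolding al_def by (rule uf_lim01[OF uf mu01])
  have al01: "0 \<le> al U \<and> al U \<le> 1" for U
    using tendsto_lowerbound[OF lim[of U]] tendsto_upperbound[OF lim[of U]] mu01 pb by auto
  assume nev: "\<not> (\<forall>\<^sub>F c in p. Lim p (\<lambda>g. mu (T \<inter> E c \<inter> E g)) > 0)"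
  then have ev0: "\<forall>\<^sub>F c in p. al (T \<inter> E c) \<le> 0"
  proof -
    have "\<forall>\<^sub>F c in p. \<not> (Lim p (\<lambda>g. mu (T \<inter> E c \<inter> E g)) > 0)"
      by (rule uf_neg[OF uf nev])
    then show ?thesis unfolding al_def by (simp add: not_less)
  qed
  define a where "a = al T"
  have a: "0 < a" "a \<le> 1" using pos al01 unfolding a_def al_def by auto
  define \<eta> where "\<eta> = a^2/8"
  have "a*a \<le> a*1" using a by (intro mult_left_mono) auto
  then have eta: "0 < \<eta>" "\<eta> < a/2" using a unfolding \<eta>_def by (auto simp: power2_eq_square)
  have evA: "\<forall>\<^sub>F c in p. mu (T \<inter> E c) > a/2"
    using order_tendstoD(1)[OF lim[of T], of "a/2"] a unfolding a_def by auto
  have build: "\<exists>C. finite C \<and> card C = k \<and> (\<forall>c\<in>C. mu (T \<inter> E c) > a/2 \<and> al (T \<inter> E c) \<le> 0)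
     \<and> (\<forall>c\<in>C. \<forall>c'\<in>C. c \<noteq> c' \<longrightarrow> mu (T \<inter> E c \<inter> E c') < \<eta>)" for k
  proof (induction k)
    case 0 show ?case by (rule exI[of _ "{}"]) simp
  next
    case (Suc k)
    from Suc.IH obtain C where CC: "finite C \<and> card C = k \<and> (\<forall>c\<in>C. mu (T \<inter> E c) > a/2 \<and> al (T \<inter> E c) \<le> 0)
      \<and> (\<forall>c\<in>C. \<forall>c'\<in>C. c \<noteq> c' \<longrightarrow> mu (T \<inter> E c \<inter> E c') < \<eta>)" by (rule exE)
    note C = conjunct1[OF CC] conjunct1[OF conjunct2[OF CC]] conjunct1[OF conjunct2[OF conjunct2[OF CC]]]
      conjunct2[OF conjunct2[OF conjunct2[OF CC]]]
    have "\<forall>c\<in>C. \<forall>\<^sub>F g in p. mu (T \<inter> E c \<inter> E g) < \<eta>"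
    proof
      fix c assume "c \<in> C"
      then have "al (T \<inter> E c) \<le> 0" using C(3) by blast
      then have "al (T \<inter> E c) < \<eta>" using eta by linarith
      then show "\<forall>\<^sub>F g in p. mu (T \<inter> E c \<inter> E g) < \<eta>"
        using order_tendstoD(2)[OF lim[of "T \<inter> E c"]] by blast
    qed
    then have "\<forall>\<^sub>F g in p. \<forall>c\<in>C. mu (T \<inter> E c \<inter> E g) < \<eta>"
      using C(1) by (simp add: eventually_ball_finite)
    then have "\<forall>\<^sub>F g in p. (\<forall>c\<in>C. mu (T \<inter> E c \<inter> E g) < \<eta>) \<and> mu (T \<inter> E g) > a/2 \<and> al (T \<inter> E g) \<le> 0"
      by (rule eventually_conj[OF _ eventually_conj[OF evA ev0]])
    then obtain g where g: "\<forall>c\<in>C. mu (T \<inter> E c \<inter> E g) < \<eta>" "mu (T \<inter> E g) > a/2" "al (T \<inter> E g) \<le> 0"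
      using ev_ex[OF pb] by blast
    have gC: "g \<notin> C"
    proof
      assume "g \<in> C"
      then have "mu (T \<inter> E g \<inter> E g) < \<eta>" using g by blast
      moreover have "T \<inter> E g \<inter> E g = T \<inter> E g" by blast
      ultimately show False using g(2) eta by simp
    qed
    have sym: "T \<inter> E g \<inter> E c = T \<inter> E c \<inter> E g" for c by blast
    have "finite (insert g C)" "card (insert g C) = Suc k" using C(1,2) gC by auto
    moreover have "\<forall>c\<in>insert g C. mu (T \<inter> E c) > a/2 \<and> al (T \<inter> E c) \<le> 0"
      using C(3) g(2,3) by blast
    moreover have "\<forall>c\<in>insert g C. \<forall>c'\<in>insert g C. c \<noteq> c' \<longrightarrow> mu (T \<inter> E c \<inter> E c') < \<eta>"
    proof (intro ballI impI)
      fix c c' assume cc: "c \<in> insert g C" "c' \<in> insert g C" "c \<noteq> c'"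
      show "mu (T \<inter> E c \<inter> E c') < \<eta>"
      proof (cases "c = g")
        case True
        then have "c' \<in> C" using cc by blast
        then have "mu (T \<inter> E c' \<inter> E g) < \<eta>" using g(1) by blast
        then show ?thesis using True sym[of c'] by simp
      next
        case False
        then have "c \<in> C" using cc by blast
        show ?thesis
        proof (cases "c' = g")
          case True then show ?thesis using \<open>c \<in> C\<close> g(1) by blast
        next
          case False then have "c' \<in> C" using cc by blast
          then show ?thesis using C(4) \<open>c \<in> C\<close> cc(3) by blast
        qed
      qed
    qed
    ultimately show ?case by blast
  qed
  obtain m :: nat where m: "8 / a^2 < real m" using reals_Archimedean2 by blast
  have "0 < 8 / a^2" using a by simp
  then have mpos: "0 < real m" using m by linarith
  from build[of m] obtain C where CC: "finite C \<and> card C = m \<and> (\<forall>c\<in>C. mu (T \<inter> E c) > a/2 \<and> al (T \<inter> E c) \<le> 0)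
      \<and> (\<forall>c\<in>C. \<forall>c'\<in>C. c \<noteq> c' \<longrightarrow> mu (T \<inter> E c \<inter> E c') < \<eta>)" by (rule exE)
  note C0 = conjunct1[OF CC] conjunct1[OF conjunct2[OF CC]] conjunct1[OF conjunct2[OF conjunct2[OF CC]]]
      conjunct2[OF conjunct2[OF conjunct2[OF CC]]]
  have C3: "\<forall>c\<in>C. mu (T \<inter> E c) > a/2" using C0(3) by simp
  note C = C0(1,2) C3 C0(4)
  have Cne: "C \<noteq> {}" using C(2) mpos by auto
  have lower: "real m * (a/2) < (\<Sum>c\<in>C. mu (T \<inter> E c))"
  proof -
    have "(\<Sum>c\<in>C. a/2) < (\<Sum>c\<in>C. mu (T \<inter> E c))"
      using C(1,3) Cne by (intro sum_strict_mono) auto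
    then show ?thesis using C(2) by simp
  qed
  have upper: "(\<Sum>c\<in>C. \<Sum>c'\<in>C. mu ((T \<inter> E c) \<inter> (T \<inter> E c'))) \<le> real m * (real m * \<eta> + 1)"
  proof -
    have "(\<Sum>c\<in>C. \<Sum>c'\<in>C. mu ((T \<inter> E c) \<inter> (T \<inter> E c'))) \<le> (\<Sum>c\<in>C. \<Sum>c'\<in>C. \<eta> + (if c' = c then 1 else 0))"
    proof (intro sum_mono)
      fix c c' assume "c \<in> C" "c' \<in> C"
      have eq: "(T \<inter> E c) \<inter> (T \<inter> E c') = T \<inter> E c \<inter> E c'" by blast
      show "mu ((T \<inter> E c) \<inter> (T \<inter> E c')) \<le> \<eta> + (if c' = c then 1 else 0)"
      proof (cases "c' = c")
        case True then show ?thesis using mu01 eta by (smt (verit))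
      next
        case False then show ?thesis using C(4) \<open>c \<in> C\<close> \<open>c' \<in> C\<close> eq by fastforce
      qed
    qed
    also have "\<dots> = (\<Sum>c\<in>C. real m * \<eta> + 1)"
      using C(1,2) by (simp add: sum.distrib)
    also have "\<dots> = real m * (real m * \<eta> + 1)" using C(2) by simp
    finally show ?thesis .
  qed
  have q: "(\<Sum>c\<in>C. mu (T \<inter> E c))^2 \<le> (\<Sum>c\<in>C. \<Sum>c'\<in>C. mu ((T \<inter> E c) \<inter> (T \<inter> E c')))"
    using quad[OF C(1), of "\<lambda>c. T \<inter> E c"] by simp
  have "(real m * (a/2))^2 < (\<Sum>c\<in>C. mu (T \<inter> E c))^2"
    using lower mpos a by (intro power_strict_mono) auto
  then have "(real m * (a/2))^2 < real m * (real m * \<eta> + 1)" using q upper by linarith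
  then have "real m * (real m * a^2 / 4) < real m * (real m * a^2/8 + 1)"
    unfolding \<eta>_def by (simp add: power_mult_distrib power2_eq_square algebra_simps)
  then have "real m * a^2 / 4 < real m * a^2/8 + 1" using mpos by simp
  then have "real m * a^2 < 8" by simp
  then have "real m < 8 / a^2" using a by (simp add: field_simps)
  then show False using m by simp
qed

lemma construct:
  fixes A :: "'a::group_add set" and p :: "'a filter" and mu :: "'a set \<Rightarrow> real"
  assumes uf: "ultrafilter p" and np: "nonprincipal p"
    and mu01: "\<And>S. 0 \<le> mu S \<and> mu S \<le> 1"
    and quad: "\<And>(I::'a set) S. finite I \<Longrightarrow> (\<Sum>i\<in>I. mu (S i))^2 \<le> (\<Sum>i\<in>I. \<Sum>j\<in>I. mu (S i \<inter> S j))"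
    and mono: "\<And>S S'. S \<subseteq> S' \<Longrightarrow> mu S \<le> mu S'"
    and fin0: "\<And>F. finite F \<Longrightarrow> mu F = 0"
    and base: "Lim p (\<lambda>g. mu (rtrans_inv A g \<inter> uf_rtrans_inv A p)) > 0"
  shows "\<exists>B C. infinite B \<and> infinite C \<and> {b + c | b c. b \<in> B \<and> c \<in> C} \<subseteq> A"
proof -
  define D where "D = uf_rtrans_inv A p"
  define E where "E g = rtrans_inv A g \<inter> D" for g
  define T where "T C = D \<inter> {x. \<forall>c\<in>C. x + c \<in> A}" for C
  define al where "al U = Lim p (\<lambda>g. mu (U \<inter> E g))" for U
  define Inv where "Inv B C \<longleftrightarrow> finite B \<and> finite C \<and> B \<subseteq> D \<and> al (T C) > 0 \<and> (\<forall>b\<in>B. \<forall>c\<in>C. b + c \<in> A)" for B C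
  have pb: "p \<noteq> bot" using uf by (simp add: ultrafilter_def)
  have lim: "((\<lambda>g. mu (U \<inter> E g)) \<longlongrightarrow> al U) p" for U
    unfolding al_def by (rule uf_lim01[OF uf mu01])
  have TE: "T C \<inter> E c = T (insert c C)" for C c
    unfolding T_def E_def rtrans_inv_def by blast
  have step: "\<exists>B' C'. Inv B' C' \<and> B \<subset> B' \<and> C \<subset> C'" if I: "Inv B C" for B C
  proof -
    have fB: "finite B" and fC: "finite C" and BD: "B \<subseteq> D" and alT: "al (T C) > 0"
      and BC: "\<forall>b\<in>B. \<forall>c\<in>C. b + c \<in> A"
      using I unfolding Inv_def by blast+
    have alT0: "0 < Lim p (\<lambda>g. mu (T C \<inter> E g))" using alT unfolding al_def .
    have ev1: "\<forall>\<^sub>F c in p. al (T C \<inter> E c) > 0"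
      unfolding al_def using key_step[OF uf mu01 _ alT0] quad by blast
    have "\<forall>b\<in>B. \<forall>\<^sub>F c in p. b + c \<in> A"
      using BD unfolding D_def uf_rtrans_inv_def by blast
    then have ev2: "\<forall>\<^sub>F c in p. \<forall>b\<in>B. b + c \<in> A"
      using fB by (simp add: eventually_ball_finite)
    have "\<forall>x\<in>C. \<forall>\<^sub>F c in p. c \<noteq> x"
    proof
      fix x
      have "\<not> eventually (\<lambda>y. y = x) p" using np unfolding nonprincipal_def by blast
      then show "\<forall>\<^sub>F c in p. c \<noteq> x" by (rule uf_neg[OF uf])
    qed
    then have ev3: "\<forall>\<^sub>F c in p. \<forall>x\<in>C. c \<noteq> x"
      using fC by (simp add: eventually_ball_finite)
    have "\<forall>\<^sub>F c in p. al (T C \<inter> E c) > 0 \<and> (\<forall>b\<in>B. b + c \<in> A) \<and> (\<forall>x\<in>C. c \<noteq> x)"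
      by (rule eventually_conj[OF ev1 eventually_conj[OF ev2 ev3]])
    then obtain c where c: "al (T C \<inter> E c) > 0" "\<forall>b\<in>B. b + c \<in> A" "\<forall>x\<in>C. c \<noteq> x"
      using ev_ex[OF pb] by blast
    define T' where "T' = T (insert c C)"
    have alT': "al T' > 0" using c(1) TE unfolding T'_def by simp
    have "\<forall>\<^sub>F g in p. mu (T' \<inter> E g) > 0"
      using order_tendstoD(1)[OF lim[of T'] alT'] .
    then obtain g where "mu (T' \<inter> E g) > 0" using ev_ex[OF pb] by blast
    moreover have "mu (T' \<inter> E g) \<le> mu T'" by (rule mono) blast
    ultimately have "mu T' > 0" by linarith
    then have "infinite T'" using fin0 by force
    then have "infinite (T' - B)" using fB by (rule Diff_infinite_finite[rotated])
    then obtain b where b: "b \<in> T'" "b \<notin> B" by (metis Diff_iff finite.emptyI ex_in_conv)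
    have bD: "b \<in> D" and bA: "\<forall>x\<in>insert c C. b + x \<in> A" using b(1) unfolding T'_def T_def by auto
    have "Inv (insert b B) (insert c C)"
      unfolding Inv_def
    proof (intro conjI)
      show "finite (insert b B)" "finite (insert c C)" using fB fC by auto
      show "insert b B \<subseteq> D" using BD bD by blast
      show "al (T (insert c C)) > 0" using alT' unfolding T'_def .
      show "\<forall>b'\<in>insert b B. \<forall>c'\<in>insert c C. b' + c' \<in> A"
        using bA c(2) BC by blast
    qed
    moreover have "B \<subset> insert b B" "C \<subset> insert c C" using b(2) c(3) by auto
    ultimately show ?thesis by blast
  qed
  define st where "st = rec_nat ({}, {}) (\<lambda>n s. SOME s'. Inv (fst s') (snd s') \<and> fst s \<subset> fst s' \<and> snd s \<subset> snd s')"
  have st0: "st 0 = ({}, {})" unfolding st_def by simp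
  have stS: "st (Suc n) = (SOME s'. Inv (fst s') (snd s') \<and> fst (st n) \<subset> fst s' \<and> snd (st n) \<subset> snd s')" for n
    unfolding st_def by simp
  have inv0: "Inv {} {}"
  proof -
    have "D \<inter> E g = rtrans_inv A g \<inter> uf_rtrans_inv A p" for g unfolding E_def D_def by blast
    moreover have "T {} = D" unfolding T_def by simp
    ultimately show ?thesis unfolding Inv_def al_def using base by simp
  qed
  have stI: "Inv (fst (st n)) (snd (st n)) \<and> fst (st n) \<subset> fst (st (Suc n)) \<and> snd (st n) \<subset> snd (st (Suc n))
        \<and> Inv (fst (st (Suc n))) (snd (st (Suc n)))" for n
  proof (induction n)
    case 0
    have "\<exists>s'. Inv (fst s') (snd s') \<and> fst (st 0) \<subset> fst s' \<and> snd (st 0) \<subset> snd s'"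
      using step[OF inv0] st0 by auto
    from someI_ex[OF this] show ?case using inv0 st0 by (simp only: stS[of 0] fst_conv snd_conv)
  next
    case (Suc n)
    then have I: "Inv (fst (st (Suc n))) (snd (st (Suc n)))" by blast
    have "\<exists>s'. Inv (fst s') (snd s') \<and> fst (st (Suc n)) \<subset> fst s' \<and> snd (st (Suc n)) \<subset> snd s'"
      using step[OF I] by auto
    from someI_ex[OF this] show ?case using I by (simp only: stS[of "Suc n"])
  qed
  define B where "B = (\<Union>n. fst (st n))"
  define C where "C = (\<Union>n. snd (st n))"
  have monoB: "fst (st m) \<subseteq> fst (st n)" if "m \<le> n" for m n
    using lift_Suc_mono_le[of "\<lambda>n. fst (st n)", OF _ that] stI by blast
  have monoC: "snd (st m) \<subseteq> snd (st n)" if "m \<le> n" for m n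
    using lift_Suc_mono_le[of "\<lambda>n. snd (st n)", OF _ that] stI by blast
  have cardB: "n \<le> card (fst (st n))" for n
  proof (induction n)
    case (Suc n)
    have "card (fst (st n)) < card (fst (st (Suc n)))"
      using stI[of n] unfolding Inv_def by (meson psubset_card_mono)
    then show ?case using Suc by linarith
  qed simp
  have cardC: "n \<le> card (snd (st n))" for n
  proof (induction n)
    case (Suc n)
    have "card (snd (st n)) < card (snd (st (Suc n)))"
      using stI[of n] unfolding Inv_def by (meson psubset_card_mono)
    then show ?case using Suc by linarith
  qed simp
  have "infinite B"
  proof
    assume f: "finite B"
    have "fst (st (Suc (card B))) \<subseteq> B" unfolding B_def by blast
    then have "card (fst (st (Suc (card B)))) \<le> card B" using f by (rule card_mono[rotated])
    then show False using cardB[of "Suc (card B)"] by linarith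
  qed
  moreover have "infinite C"
  proof
    assume f: "finite C"
    have "snd (st (Suc (card C))) \<subseteq> C" unfolding C_def by blast
    then have "card (snd (st (Suc (card C)))) \<le> card C" using f by (rule card_mono[rotated])
    then show False using cardC[of "Suc (card C)"] by linarith
  qed
  moreover have "{b + c | b c. b \<in> B \<and> c \<in> C} \<subseteq> A"
  proof
    fix x assume "x \<in> {b + c | b c. b \<in> B \<and> c \<in> C}"
    then obtain b c where x: "x = b + c" "b \<in> B" "c \<in> C" by blast
    then obtain i j where "b \<in> fst (st i)" "c \<in> snd (st j)" unfolding B_def C_def by blast
    then have "b \<in> fst (st (max i j))" "c \<in> snd (st (max i j))"
      using monoB[of i "max i j"] monoC[of j "max i j"] by auto
    then show "x \<in> A" using stI[of "max i j"] x(1) unfolding Inv_def by blast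
  qed
  ultimately show ?thesis by blast
qed

lemma quadN:
  fixes \<Phi> :: "'a set" and S :: "'b \<Rightarrow> 'a set"
  assumes fP: "finite \<Phi>" and ne: "\<Phi> \<noteq> {}" and fI: "finite I"
  shows "(\<Sum>i\<in>I. real (card (S i \<inter> \<Phi>)) / real (card \<Phi>))^2
     \<le> (\<Sum>i\<in>I. \<Sum>j\<in>I. real (card ((S i \<inter> S j) \<inter> \<Phi>)) / real (card \<Phi>))"
proof -
  define n where "n = real (card \<Phi>)"
  have n: "n > 0" unfolding n_def using fP ne by (simp add: card_gt_0_iff)
  have cardind: "real (card (U \<inter> \<Phi>)) = (\<Sum>x\<in>\<Phi>. indicator U x)" for U
  proof -
    have "(\<Sum>x\<in>\<Phi>. (indicator U x :: real)) = (\<Sum>x\<in>\<Phi>. real (indicator U x :: nat))"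
      by (simp add: real_of_nat_indicator)
    also have "\<dots> = real (\<Sum>x\<in>\<Phi>. (indicator U x :: nat))" by (simp only: of_nat_sum)
    also have "\<dots> = real (card (\<Phi> \<inter> U))" using sum_indicator_eq_card[OF fP, of U] by simp
    finally show ?thesis by (simp add: Int_commute)
  qed
  define h where "h x = (\<Sum>i\<in>I. indicator (S i) x :: real)" for x
  have L: "(\<Sum>i\<in>I. real (card (S i \<inter> \<Phi>)) / real (card \<Phi>)) = (\<Sum>x\<in>\<Phi>. h x) / n"
    unfolding cardind h_def n_def by (simp add: sum_divide_distrib[symmetric] sum.swap[of _ I])
  have R: "(\<Sum>i\<in>I. \<Sum>j\<in>I. real (card ((S i \<inter> S j) \<inter> \<Phi>)) / real (card \<Phi>)) = (\<Sum>x\<in>\<Phi>. (h x)^2) / n"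
  proof -
    have "(h x)^2 = (\<Sum>i\<in>I. \<Sum>j\<in>I. indicator (S i \<inter> S j) x)" for x
      unfolding h_def power2_eq_square sum_product by (simp add: indicator_inter_arith)
    then have "(\<Sum>x\<in>\<Phi>. (h x)^2) = (\<Sum>i\<in>I. \<Sum>j\<in>I. real (card ((S i \<inter> S j) \<inter> \<Phi>)))"
      unfolding cardind by (simp add: sum.swap[of _ \<Phi>])
    then show ?thesis unfolding n_def by (simp add: sum_divide_distrib[symmetric])
  qed
  have CS: "(\<Sum>x\<in>\<Phi>. h x * 1)^2 \<le> (\<Sum>x\<in>\<Phi>. (h x)^2) * (\<Sum>x\<in>\<Phi>. 1^2)"
    by (rule Cauchy_Schwarz_ineq_sum)
  then have CS': "(\<Sum>x\<in>\<Phi>. h x)^2 \<le> (\<Sum>x\<in>\<Phi>. (h x)^2) * n" unfolding n_def by simp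
  have "((\<Sum>x\<in>\<Phi>. h x) / n)^2 = (\<Sum>x\<in>\<Phi>. h x)^2 / n^2" by (simp add: power_divide)
  also have "\<dots> \<le> ((\<Sum>x\<in>\<Phi>. (h x)^2) * n) / n^2" using CS' n by (intro divide_right_mono) auto
  also have "\<dots> = (\<Sum>x\<in>\<Phi>. (h x)^2) / n" using n by (simp add: power2_eq_square)
  finally show ?thesis using L R by simp
qed

lemma uf_finite_point:
  assumes uf: "ultrafilter p" and fF: "finite F"
  shows "eventually (\<lambda>y. y \<in> F) p \<Longrightarrow> \<exists>x. eventually (\<lambda>y. y = x) p"
  using fF
proof (induction F rule: finite_induct)
  case empty
  then show ?case using uf by (simp add: ultrafilter_def)
next
  case (insert a F)
  show ?case
  proof (cases "eventually (\<lambda>y. y = a) p")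
    case True then show ?thesis by blast
  next
    case False
    then have "eventually (\<lambda>y. y \<noteq> a) p" using uf_neg[OF uf] by blast
    with insert.prems have "eventually (\<lambda>y. y \<in> F) p" by eventually_elim auto
    then show ?thesis by (rule insert.IH)
  qed
qed

lemma uf_infinite:
  assumes uf: "ultrafilter (p :: 'a filter)" and np: "nonprincipal p"
  shows "infinite (UNIV :: 'a set)"
proof
  assume "finite (UNIV :: 'a set)"
  from uf_finite_point[OF uf this] obtain x where "eventually (\<lambda>y. y = x) p" by auto
  then show False using np unfolding nonprincipal_def by blast
qed

lemma card_grow:
  fixes \<Phi> :: "nat \<Rightarrow> 'a::group_add set"
  assumes fin: "\<And>N. finite (\<Phi> N) \<and> \<Phi> N \<noteq> {}"
    and fol: "\<And>g. (\<lambda>N. real (card (((\<lambda>h. h + g) ` \<Phi> N) - \<Phi> N \<union> (\<Phi> N - (\<lambda>h. h + g) ` \<Phi> N)))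
              / real (card (\<Phi> N))) \<longlonglongrightarrow> 0"
    and inf: "infinite (UNIV :: 'a set)"
  shows "eventually (\<lambda>N. M < card (\<Phi> N)) sequentially"
proof -
  define SD where "SD g N = ((\<lambda>h. h + g) ` \<Phi> N) - \<Phi> N \<union> (\<Phi> N - (\<lambda>h. h + g) ` \<Phi> N)" for g N
  obtain K :: "'a set" where K: "finite K" "card K = Suc M" using infinite_arbitrarily_large[OF inf] by blast
  have pos: "0 < 1 / real (Suc M)" by simp
  have "\<forall>g\<in>K. eventually (\<lambda>N. real (card (SD g N)) / real (card (\<Phi> N)) < 1 / real (Suc M)) sequentially"
    unfolding SD_def using order_tendstoD(2)[OF fol pos] by blast
  then have "eventually (\<lambda>N. \<forall>g\<in>K. real (card (SD g N)) / real (card (\<Phi> N)) < 1 / real (Suc M)) sequentially"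
    using K(1) by (simp add: eventually_ball_finite)
  then show ?thesis
  proof eventually_elim
    case (elim N)
    define P where "P = \<Phi> N"
    have fP: "finite P" and neP: "P \<noteq> {}" using fin unfolding P_def by auto
    have n: "0 < card P" using fP neP by (simp add: card_gt_0_iff)
    show ?case
    proof (cases "\<exists>g\<in>K. SD g N \<noteq> {}")
      case True
      then obtain g where g: "g \<in> K" "SD g N \<noteq> {}" by blast
      have "finite (SD g N)" unfolding SD_def using fin by auto
      then have c1: "1 \<le> card (SD g N)" using g(2) by (simp add: Suc_le_eq card_gt_0_iff)
      have lt: "real (card (SD g N)) / real (card P) < 1 / real (Suc M)" using elim g(1) unfolding P_def by blast
      have "1 / real (card P) \<le> real (card (SD g N)) / real (card P)"
        using c1 n by (intro divide_right_mono) auto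
      then have "1 / real (card P) < 1 / real (Suc M)" using lt by linarith
      then have "real (Suc M) < real (card P)"
      proof (rule contrapos_pp)
        assume "\<not> real (Suc M) < real (card P)"
        then have "real (card P) \<le> real (Suc M)" by simp
        then show "\<not> 1 / real (card P) < 1 / real (Suc M)"
          using n by (simp add: not_less frac_le)
      qed
      then show ?thesis unfolding P_def by simp
    next
      case False
      then have sub: "\<forall>g\<in>K. (\<lambda>h. h + g) ` P \<subseteq> P" unfolding SD_def P_def by blast
      obtain x where x: "x \<in> P" using neP by blast
      have "(\<lambda>g. x + g) ` K \<subseteq> P" using sub x by blast
      moreover have "inj_on (\<lambda>g. x + g) K" by (simp add: inj_on_def)
      ultimately have "card K \<le> card P" using fP by (metis card_image card_mono)
      then show ?thesis using K(2) unfolding P_def by simp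
    qed
  qed
qed

theorem theorem5p2:
  fixes A :: "'a::{group_add, countable} set"
    and \<Phi> :: "nat \<Rightarrow> 'a set"
    and p :: "'a filter"
  assumes "amenable_group TYPE('a)"
    and "two_sided_folner_seq \<Phi>"
    and "ultrafilter p" and "nonprincipal p"
    and "\<forall>g. density_exists \<Phi> (rtrans_inv A g \<inter> uf_rtrans_inv A p)"
    and "\<exists>L>0. ((\<lambda>g. density \<Phi> (rtrans_inv A g \<inter> uf_rtrans_inv A p)) \<longlongrightarrow> L) p"
  shows "\<exists>B C. infinite B \<and> infinite C \<and> {b + c | b c. b \<in> B \<and> c \<in> C} \<subseteq> A"
proof -
  note uf = assms(3) and np = assms(4)
  have fin: "\<And>N. finite (\<Phi> N) \<and> \<Phi> N \<noteq> {}"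
    and fol: "\<And>g. (\<lambda>N. real (card (((\<lambda>h. h + g) ` \<Phi> N) - \<Phi> N \<union> (\<Phi> N - (\<lambda>h. h + g) ` \<Phi> N)))
              / real (card (\<Phi> N))) \<longlonglongrightarrow> 0"
    using assms(2) unfolding two_sided_folner_seq_def by blast+
  have inf: "infinite (UNIV :: 'a set)" by (rule uf_infinite[OF uf np])
  have grow: "eventually (\<lambda>N. M < card (\<Phi> N)) sequentially" for M
    by (rule card_grow[OF fin fol inf])
  obtain r :: "nat filter" where r: "r \<le> sequentially" "ultrafilter r"
    using ex_uf[of "sequentially :: nat filter"] by auto
  have rb: "r \<noteq> bot" using r(2) by (simp add: ultrafilter_def)
  define mu where "mu S = Lim r (dens_ratio \<Phi> S)" for S
  have d01: "0 \<le> dens_ratio \<Phi> S N \<and> dens_ratio \<Phi> S N \<le> 1" for S N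
  proof -
    have "card (S \<inter> \<Phi> N) \<le> card (\<Phi> N)" using fin by (intro card_mono) auto
    moreover have "0 < card (\<Phi> N)" using fin by (simp add: card_gt_0_iff)
    ultimately show ?thesis unfolding dens_ratio_def by (simp add: divide_le_eq_1)
  qed
  have limr: "(dens_ratio \<Phi> S \<longlongrightarrow> mu S) r" for S
    unfolding mu_def by (rule uf_lim01[OF r(2) d01])
  have mu01: "0 \<le> mu S \<and> mu S \<le> 1" for S
  proof
    show "0 \<le> mu S" using limr[of S] d01 rb by (intro tendsto_lowerbound[of "dens_ratio \<Phi> S"]) (auto intro: always_eventually)
    show "mu S \<le> 1" using limr[of S] d01 rb by (intro tendsto_upperbound[of "dens_ratio \<Phi> S"]) (auto intro: always_eventually)
  qed
  have mono: "mu S \<le> mu S'" if "S \<subseteq> S'" for S S'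
  proof (rule tendsto_le[OF _ limr limr])
    show "\<not> trivial_limit r" using rb by simp
    show "\<forall>\<^sub>F N in r. dens_ratio \<Phi> S N \<le> dens_ratio \<Phi> S' N"
    proof (intro always_eventually allI)
      fix N
      have "card (S \<inter> \<Phi> N) \<le> card (S' \<inter> \<Phi> N)" using fin that by (intro card_mono) auto
      then show "dens_ratio \<Phi> S N \<le> dens_ratio \<Phi> S' N" unfolding dens_ratio_def
        by (intro divide_right_mono) auto
    qed
  qed
  have seqr: "(f \<longlongrightarrow> l) sequentially \<Longrightarrow> Lim r f = l" for f :: "nat \<Rightarrow> real" and l
    using tendsto_Lim[of r f l] tendsto_mono[OF r(1)] rb by auto
  have fin0: "mu F = 0" if fF: "finite F" for F
  proof -
    have atop: "filterlim (\<lambda>N. real (card (\<Phi> N))) at_top sequentially"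
      unfolding filterlim_at_top
    proof
      fix Z :: real
      show "\<forall>\<^sub>F N in sequentially. Z \<le> real (card (\<Phi> N))"
        using grow[of "nat \<lceil>Z\<rceil>"] by eventually_elim linarith
    qed
    have h0: "((\<lambda>N. real (card F) / real (card (\<Phi> N))) \<longlongrightarrow> 0) sequentially"
      by (rule tendsto_divide_0[OF tendsto_const filterlim_at_top_imp_at_infinity[OF atop]])
    have "(dens_ratio \<Phi> F \<longlongrightarrow> 0) sequentially"
    proof (rule tendsto_sandwich[OF _ _ tendsto_const h0])
      show "\<forall>\<^sub>F N in sequentially. 0 \<le> dens_ratio \<Phi> F N" using d01 by (auto intro: always_eventually)
      show "\<forall>\<^sub>F N in sequentially. dens_ratio \<Phi> F N \<le> real (card F) / real (card (\<Phi> N))"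
      proof (intro always_eventually allI)
        fix N
        have "card (F \<inter> \<Phi> N) \<le> card F" using fF by (intro card_mono) auto
        then show "dens_ratio \<Phi> F N \<le> real (card F) / real (card (\<Phi> N))"
          unfolding dens_ratio_def by (intro divide_right_mono) auto
      qed
    qed
    then show ?thesis unfolding mu_def by (rule seqr)
  qed
  have quad: "(\<Sum>i\<in>I. mu (S i))^2 \<le> (\<Sum>i\<in>I. \<Sum>j\<in>I. mu (S i \<inter> S j))" if fI: "finite (I::'a set)" for I S
  proof -
    have l1: "((\<lambda>N. \<Sum>i\<in>I. \<Sum>j\<in>I. dens_ratio \<Phi> (S i \<inter> S j) N) \<longlongrightarrow> (\<Sum>i\<in>I. \<Sum>j\<in>I. mu (S i \<inter> S j))) r"
      by (intro tendsto_sum limr)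
    have l2: "((\<lambda>N. (\<Sum>i\<in>I. dens_ratio \<Phi> (S i) N)^2) \<longlongrightarrow> (\<Sum>i\<in>I. mu (S i))^2) r"
      by (intro tendsto_power tendsto_sum limr)
    show ?thesis
  proof (rule tendsto_le[OF _ l1 l2])
    show "\<not> trivial_limit r" using rb by simp
    show "\<forall>\<^sub>F N in r. (\<Sum>i\<in>I. dens_ratio \<Phi> (S i) N)^2 \<le> (\<Sum>i\<in>I. \<Sum>j\<in>I. dens_ratio \<Phi> (S i \<inter> S j) N)"
    proof (intro always_eventually allI)
      fix N
      show "(\<Sum>i\<in>I. dens_ratio \<Phi> (S i) N)^2 \<le> (\<Sum>i\<in>I. \<Sum>j\<in>I. dens_ratio \<Phi> (S i \<inter> S j) N)"
        unfolding dens_ratio_def using quadN[of "\<Phi> N" I S] fin fI by blast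
    qed
  qed
  qed
  obtain L where L: "L > 0" "((\<lambda>g. density \<Phi> (rtrans_inv A g \<inter> uf_rtrans_inv A p)) \<longlongrightarrow> L) p"
    using assms(6) by blast
  have eqd: "mu (rtrans_inv A g \<inter> uf_rtrans_inv A p) = density \<Phi> (rtrans_inv A g \<inter> uf_rtrans_inv A p)" for g
  proof -
    have "convergent (dens_ratio \<Phi> (rtrans_inv A g \<inter> uf_rtrans_inv A p))"
      using assms(5) unfolding density_exists_def by blast
    then have "dens_ratio \<Phi> (rtrans_inv A g \<inter> uf_rtrans_inv A p) \<longlonglongrightarrow> density \<Phi> (rtrans_inv A g \<inter> uf_rtrans_inv A p)"
      unfolding density_def by (simp add: convergent_LIMSEQ_iff)
    then show ?thesis unfolding mu_def by (rule seqr)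
  qed
  have pb: "p \<noteq> bot" using uf by (simp add: ultrafilter_def)
  have "Lim p (\<lambda>g. mu (rtrans_inv A g \<inter> uf_rtrans_inv A p)) = L"
    unfolding eqd using L(2) pb by (simp add: tendsto_Lim)
  then have base: "Lim p (\<lambda>g. mu (rtrans_inv A g \<inter> uf_rtrans_inv A p)) > 0" using L(1) by simp
  show ?thesis
    by (rule construct[OF uf np mu01 quad mono fin0 base])
qed

end
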